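(* Let $\mathbf d\in\mathbb Z^{\Delta_0}$. Then $\langle\mathbf d,\mathbf d\rangle\ge-\delta\,(d_0-d_\infty)^2$. Moreover, equality holds if and only if $d_{i,j}=\frac{1}{m_i}\bigl((m_i-j)d_0+j\,d_\infty\bigr)$ for all $i\in[1,n]$ and $j\in[1,m_i-1]$.
   Context: $[a,b]=\{l\in\mathbb Z:a\le l\le b\}$. Fix $n\ge3$ and integers $m_1,\dots,m_n\ge2$. $\Delta_0=\{0,\infty\}\cup\{(i,j):i\in[1,n],j\in[1,m_i-1]\}$ (the vertex set of the quiver of the canonical algebra of type $(m_1,\dots,m_n)$). For $\mathbf d\in\mathbb Z^{\Delta_0}$ write $d_{i,0}=d_0$, $d_{i,m_i}=d_\infty$, $d_{i,j}=d_{(i,j)}$. The Ringel form is $\langle\mathbf d',\mathbf d''\rangle=d_0'd_0''+\sum_{i\in[1,n],j\in[1,m_i-1]}d'_{i,j}d''_{i,j}+d'_\infty d''_\infty-\sum_{i\in[1,n],j\in[1,m_i]}d'_{i,j}d''_{i,j-1}+(n-2)d'_\infty d''_0$. Set $\delta=\frac12\bigl(n-2-\frac1{m_1}-\cdots-\frac1{m_n}\bigr)$. *)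

theory Defs
  imports Complex_Main
begin

text \<open>Vertices of the quiver of the canonical algebra: 0, infinity, and (i,j).\<close>
datatype vertex = V0 | VInf | Arm nat nat

definition Delta0 :: "nat \<Rightarrow> (nat \<Rightarrow> nat) \<Rightarrow> vertex set" where
  "Delta0 n m = {V0, VInf} \<union> {Arm i j | i j. 1 \<le> i \<and> i \<le> n \<and> 1 \<le> j \<and> j \<le> m i - 1}"

text \<open>Convention d_{i,0} = d_0, d_{i,m_i} = d_infty, d_{i,j} = d_(i,j).\<close>
definition dcoord :: "(nat \<Rightarrow> nat) \<Rightarrow> (vertex \<Rightarrow> int) \<Rightarrow> nat \<Rightarrow> nat \<Rightarrow> int" where
  "dcoord m d i j = (if j = 0 then d V0 else if j = m i then d VInf else d (Arm i j))"

definition ringel_form :: "nat \<Rightarrow> (nat \<Rightarrow> nat) \<Rightarrow> (vertex \<Rightarrow> int) \<Rightarrow> (vertex \<Rightarrow> int) \<Rightarrow> int" where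
  "ringel_form n m d' d'' =
     d' V0 * d'' V0
     + (\<Sum>i\<in>{1..n}. \<Sum>j\<in>{1..m i - 1}. d' (Arm i j) * d'' (Arm i j))
     + d' VInf * d'' VInf
     - (\<Sum>i\<in>{1..n}. \<Sum>j\<in>{1..m i}. dcoord m d' i j * dcoord m d'' i (j - 1))
     + (int n - 2) * d' VInf * d'' V0"

definition delta_can :: "nat \<Rightarrow> (nat \<Rightarrow> nat) \<Rightarrow> real" where
  "delta_can n m = (real n - 2 - (\<Sum>i\<in>{1..n}. 1 / real (m i))) / 2"

end

theory Submission
  imports Defs
begin


lemma arm_id:
  fixes x :: "nat \<Rightarrow> real"
  shows "(\<Sum>j\<in>{1..k}. (x j - x (j-1))^2) = 2*(\<Sum>j\<in>{1..k}. (x j)^2) - (x k)^2 + (x 0)^2 - 2*(\<Sum>j\<in>{1..k}. x j * x (j-1))"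
  by (induction k) (auto simp: sum.cl_ivl_Suc power2_eq_square algebra_simps)

lemma tele:
  fixes x :: "nat \<Rightarrow> real"
  shows "(\<Sum>j\<in>{1..k}. (x j - x (j-1))) = x k - x 0"
  by (induction k) (auto simp: sum.cl_ivl_Suc)

lemma cs:
  fixes x :: "nat \<Rightarrow> real" assumes k: "k \<ge> 1"
  shows "(\<Sum>j\<in>{1..k}. (x j - x (j-1))^2) \<ge> (x k - x 0)^2 / k \<and>
    ((\<Sum>j\<in>{1..k}. (x j - x (j-1))^2) = (x k - x 0)^2 / k \<longleftrightarrow> (\<forall>j\<in>{1..k}. x j - x (j-1) = (x k - x 0)/k))"
proof -
  define c where "c = (x k - x 0)/k"
  have kp: "real k > 0" using k by simp
  have "(\<Sum>j\<in>{1..k}. (x j - x (j-1) - c)^2) = (\<Sum>j\<in>{1..k}. (x j - x (j-1))^2) - 2*c*(\<Sum>j\<in>{1..k}. (x j - x (j-1))) + k*c^2"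
  proof -
    have "(\<Sum>j\<in>{1..k}. (x j - x (j-1) - c)^2) = (\<Sum>j\<in>{1..k}. (x j - x (j-1))^2 - 2*c*(x j - x (j-1)) + c^2)"
      by (intro sum.cong) (auto simp: power2_eq_square algebra_simps)
    also have "\<dots> = (\<Sum>j\<in>{1..k}. (x j - x (j-1))^2) - (\<Sum>j\<in>{1..k}. 2*c*(x j - x (j-1))) + k*c^2"
      by (simp add: sum.distrib sum_subtractf)
    finally show ?thesis by (simp add: sum_distrib_left)
  qed
  also have "\<dots> = (\<Sum>j\<in>{1..k}. (x j - x (j-1))^2) - (x k - x 0)^2 / k"
    using kp unfolding tele by (simp add: c_def power2_eq_square field_simps)
  finally have E: "(\<Sum>j\<in>{1..k}. (x j - x (j-1) - c)^2) = (\<Sum>j\<in>{1..k}. (x j - x (j-1))^2) - (x k - x 0)^2 / k" .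
  have N: "(\<Sum>j\<in>{1..k}. (x j - x (j-1) - c)^2) \<ge> 0" by (simp add: sum_nonneg)
  have Z: "(\<Sum>j\<in>{1..k}. (x j - x (j-1) - c)^2) = 0 \<longleftrightarrow> (\<forall>j\<in>{1..k}. x j - x (j-1) = c)"
    by (subst sum_nonneg_eq_0_iff) auto
  show ?thesis using E N Z unfolding c_def by auto
qed

lemma lin:
  fixes x :: "nat \<Rightarrow> real" assumes k: "k \<ge> 1"
  shows "(\<forall>j\<in>{1..k}. x j - x (j-1) = (x k - x 0)/k) \<longleftrightarrow>
    (\<forall>j\<in>{1..k-1}. x j = (real (k - j) * x 0 + real j * x k) / real k)"
proof
  assume H: "\<forall>j\<in>{1..k}. x j - x (j-1) = (x k - x 0)/k"
  have "j \<le> k \<Longrightarrow> x j = x 0 + j * ((x k - x 0)/k)" for j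
  proof (induction j)
    case (Suc j)
    then have "x (Suc j) - x j = (x k - x 0)/k" using H by (metis One_nat_def atLeastAtMost_iff diff_Suc_1 le_add1 plus_1_eq_Suc)
    then show ?case using Suc k by (simp add: field_simps)
  qed simp
  then show "\<forall>j\<in>{1..k-1}. x j = (real (k - j) * x 0 + real j * x k) / real k"
    using k by (auto simp: of_nat_diff field_simps)
next
  assume H: "\<forall>j\<in>{1..k-1}. x j = (real (k - j) * x 0 + real j * x k) / real k"
  have F: "j \<le> k \<Longrightarrow> x j = (real (k - j) * x 0 + real j * x k) / real k" for j
  proof -
    assume "j \<le> k"
    then consider "j = 0" | "j = k" | "j \<in> {1..k-1}" by fastforce
    then show ?thesis
    proof cases
      case 1 then show ?thesis using k by simp
    next
      case 2 then show ?thesis using k by simp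
    next
      case 3 then show ?thesis using H by blast
    qed
  qed
  show "\<forall>j\<in>{1..k}. x j - x (j-1) = (x k - x 0)/k"
  proof
    fix j assume j: "j \<in> {1..k}"
    have jk: "j \<le> k" "j - 1 \<le> k" "1 \<le> j" using j by auto
    have c1: "real (k - j) = real k - real j" "real (k - (j-1)) = real k - real j + 1" "real (j-1) = real j - 1"
      using jk by (auto simp: of_nat_diff)
    have "x j = ((real k - real j) * x 0 + real j * x k) / real k" using F[OF jk(1)] c1 by simp
    moreover have "x (j-1) = ((real k - real j + 1) * x 0 + (real j - 1) * x k) / real k"
      using F[OF jk(2)] c1 by simp
    moreover have "real k > 0" using k by simp
    ultimately show "x j - x (j-1) = (x k - x 0)/k" by (simp add: field_simps)
  qed
qed


theorem lemma1p7:
  fixes n :: nat and m :: "nat \<Rightarrow> nat" and d :: "vertex \<Rightarrow> int"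
  assumes "n \<ge> 3"
    and "\<forall>i\<in>{1..n}. m i \<ge> 2"
  shows "real_of_int (ringel_form n m d d) \<ge> - delta_can n m * (real_of_int (d V0 - d VInf))\<^sup>2
    \<and> (real_of_int (ringel_form n m d d) = - delta_can n m * (real_of_int (d V0 - d VInf))\<^sup>2
       \<longleftrightarrow> (\<forall>i\<in>{1..n}. \<forall>j\<in>{1..m i - 1}.
             real_of_int (d (Arm i j)) =
               (real (m i - j) * real_of_int (d V0) + real j * real_of_int (d VInf)) / real (m i)))"
proof -
  define a where "a = real_of_int (d V0)"
  define b where "b = real_of_int (d VInf)"
  define x where "x i j = real_of_int (dcoord m d i j)" for i j
  define S where "S i = (\<Sum>j\<in>{1..m i}. (x i j - x i (j-1))^2)" for i
  have m1: "m i \<ge> 1" if "i \<in> {1..n}" for i using assms(2) that by fastforce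
  have x0: "x i 0 = a" for i by (simp add: x_def a_def dcoord_def)
  have xm: "x i (m i) = b" if "i \<in> {1..n}" for i using m1[OF that] by (simp add: x_def b_def dcoord_def)
  have xa: "x i j = real_of_int (d (Arm i j))" if "j \<in> {1..m i - 1}" for i j
    using that by (auto simp: x_def dcoord_def)
  have arm: "(\<Sum>j\<in>{1..m i - 1}. real_of_int (d (Arm i j)) ^ 2) - (\<Sum>j\<in>{1..m i}. x i j * x i (j-1))
      = S i / 2 - (a^2 + b^2)/2" if i: "i \<in> {1..n}" for i
  proof -
    have e1: "(\<Sum>j\<in>{1..m i - 1}. real_of_int (d (Arm i j)) ^ 2) = (\<Sum>j\<in>{1..m i - 1}. (x i j) ^ 2)"
      using xa by (intro sum.cong) auto
    have e2: "(\<Sum>j\<in>{1..m i}. (x i j)^2) = (\<Sum>j\<in>{1..m i - 1}. (x i j) ^ 2) + (x i (m i))^2"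
      using m1[OF i] sum.cl_ivl_Suc[of "\<lambda>j. (x i j)^2" 1 "m i - 1"] by simp
    have e3: "S i = 2*(\<Sum>j\<in>{1..m i}. (x i j)^2) - b^2 + a^2 - 2*(\<Sum>j\<in>{1..m i}. x i j * x i (j-1))"
      using arm_id[of "x i" "m i"] x0 xm[OF i] unfolding S_def by simp
    have e4: "(\<Sum>j\<in>{1..m i}. (x i j)^2) = (\<Sum>j\<in>{1..m i - 1}. (x i j) ^ 2) + b^2"
      using e2 xm[OF i] by simp
    show ?thesis unfolding e1 e3 e4 by (simp add: field_simps)
  qed
  have R: "real_of_int (ringel_form n m d d) = a^2 + b^2 + (real n - 2) * b * a + (\<Sum>i\<in>{1..n}. S i / 2 - (a^2 + b^2)/2)"
  proof -
    have "real_of_int (ringel_form n m d d) = a^2 + b^2 + (real n - 2) * b * a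
       + ((\<Sum>i\<in>{1..n}. \<Sum>j\<in>{1..m i - 1}. real_of_int (d (Arm i j)) ^ 2) - (\<Sum>i\<in>{1..n}. \<Sum>j\<in>{1..m i}. x i j * x i (j-1)))"
      unfolding ringel_form_def a_def b_def x_def by (simp add: power2_eq_square)
    also have "\<dots> = a^2 + b^2 + (real n - 2) * b * a + (\<Sum>i\<in>{1..n}. S i / 2 - (a^2 + b^2)/2)"
      using arm by (simp add: sum_subtractf[symmetric])
    finally show ?thesis .
  qed
  have D: "real_of_int (ringel_form n m d d) + delta_can n m * (real_of_int (d V0 - d VInf))\<^sup>2
     = (\<Sum>i\<in>{1..n}. (S i - (x i (m i) - x i 0)^2 / real (m i)) / 2)"
  proof -
    have "(\<Sum>i\<in>{1..n}. (S i - (x i (m i) - x i 0)^2 / real (m i)) / 2) = (\<Sum>i\<in>{1..n}. S i / 2 - (b - a)^2 / (2 * real (m i)))"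
      using xm x0 by (intro sum.cong) auto
    also have "\<dots> = (\<Sum>i\<in>{1..n}. S i / 2) - (b-a)^2/2 * (\<Sum>i\<in>{1..n}. 1 / real (m i))"
      by (simp add: sum_subtractf sum_distrib_left)
    finally have "(\<Sum>i\<in>{1..n}. (S i - (x i (m i) - x i 0)^2 / real (m i)) / 2) = (\<Sum>i\<in>{1..n}. S i / 2) - (b-a)^2/2 * (\<Sum>i\<in>{1..n}. 1 / real (m i))" .
    moreover have "(\<Sum>i\<in>{1..n}. S i / 2 - (a^2 + b^2)/2) = (\<Sum>i\<in>{1..n}. S i / 2) - real n * (a^2 + b^2)/2"
      by (simp add: sum_subtractf)
    ultimately show ?thesis using R unfolding delta_can_def a_def b_def
      by (simp add: power2_eq_square algebra_simps diff_divide_distrib add_divide_distrib)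
  qed
  have T: "(S i - (x i (m i) - x i 0)^2 / real (m i)) / 2 \<ge> 0 \<and>
     ((S i - (x i (m i) - x i 0)^2 / real (m i)) / 2 = 0 \<longleftrightarrow>
      (\<forall>j\<in>{1..m i - 1}. real_of_int (d (Arm i j)) =
               (real (m i - j) * real_of_int (d V0) + real j * real_of_int (d VInf)) / real (m i)))"
    if i: "i \<in> {1..n}" for i
  proof -
    have c: "S i \<ge> (x i (m i) - x i 0)^2 / m i \<and> (S i = (x i (m i) - x i 0)^2 / m i \<longleftrightarrow>
      (\<forall>j\<in>{1..m i - 1}. x i j = (real (m i - j) * x i 0 + real j * x i (m i)) / real (m i)))"
      using cs[OF m1[OF i], of "x i"] lin[OF m1[OF i], of "x i"] unfolding S_def by simp
    have "(\<forall>j\<in>{1..m i - 1}. x i j = (real (m i - j) * x i 0 + real j * x i (m i)) / real (m i)) \<longleftrightarrow>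
      (\<forall>j\<in>{1..m i - 1}. real_of_int (d (Arm i j)) =
               (real (m i - j) * real_of_int (d V0) + real j * real_of_int (d VInf)) / real (m i))"
      using xa x0 xm[OF i] unfolding a_def b_def by auto
    then show ?thesis using c by auto
  qed
  have fin: "finite {1..n}" by simp
  have N: "(\<Sum>i\<in>{1..n}. (S i - (x i (m i) - x i 0)^2 / real (m i)) / 2) \<ge> 0"
    using T by (intro sum_nonneg) auto
  have Z: "(\<Sum>i\<in>{1..n}. (S i - (x i (m i) - x i 0)^2 / real (m i)) / 2) = 0 \<longleftrightarrow>
     (\<forall>i\<in>{1..n}. (S i - (x i (m i) - x i 0)^2 / real (m i)) / 2 = 0)"
    using T by (intro sum_nonneg_eq_0_iff[OF fin]) auto
  show ?thesis using D N Z T by (auto simp: algebra_simps)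
qed

end
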